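(* In Ruleset D, for any superposition of single Nim heaps, $\langle \mathrm{Nim}(i_1),\ldots,\mathrm{Nim}(i_\ell)\rangle_D\equiv *k$ where $k=\max_{1\le j\le\ell} i_j$.
   Context: Single-heap Nim: $\mathrm{Nim}(x)$ is a heap of $x$ tokens; classical move $(1,-j)$, $j\ge1$, removes $j$ tokens and is illegal if fewer than $j$ tokens remain. Quantum variation: a position is a nonempty finite set $\langle G_1,\ldots,G_n\rangle$ of classical positions; a classical move is legal if legal in some $G_i$; a Q-move is a nonempty set of legal classical moves, leading to the superposition of all legal results of applying one of its moves to one of the $G_i$. Ruleset D (subscript $D$): every Q-move, including a single classical move, is allowed. The player with no allowed Q-move loses. $\equiv$ is game equivalence, $*k$ the value of a classical Nim heap of $k$ tokens. *)

theory Defs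
  imports Main "HOL-Library.FSet"
begin

datatype game = Game (opts: "game fset")

lemma size_opt_less: "x |\<in>| S \<Longrightarrow> size x < size (Game S)"
proof -
  assume "x |\<in>| S"
  then have "Suc (size x) \<le> (\<Sum>y\<in>fset S. Suc (size y))"
    by (intro member_le_sum) auto
  then show ?thesis by simp
qed

function P_pos :: "game \<Rightarrow> bool" where
  "P_pos (Game S) = (\<forall>g \<in> fset S. \<not> P_pos g)"
  by pat_completeness auto
termination
  by (relation "measure size") (auto dest: size_opt_less)

function gsum :: "game \<Rightarrow> game \<Rightarrow> game" where
  "gsum (Game A) (Game B) =
     Game ((\<lambda>a. gsum a (Game B)) |`| A |\<union>| (\<lambda>b. gsum (Game A) b) |`| B)"
  by pat_completeness auto
termination
  by (relation "measure (\<lambda>(g, h). size g + size h)")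
     (auto dest!: size_opt_less)

definition game_equiv :: "game \<Rightarrow> game \<Rightarrow> bool" (infix "\<equiv>\<^sub>G" 50) where
  "G \<equiv>\<^sub>G H \<longleftrightarrow> (\<forall>X. P_pos (gsum G X) = P_pos (gsum H X))"

fun nimber :: "nat \<Rightarrow> game" where
  "nimber k = Game (Abs_fset (nimber ` {..<k}))"

text \<open>A quantum position is a nonempty finite set of classical single-heap Nim
positions, each represented by its number of tokens.  The classical move
\<open>(1,-j)\<close> is represented by \<open>j\<close>; it is legal in heap \<open>x\<close> iff \<open>1 \<le> j \<le> x\<close>.\<close>

definition classical_legal :: "nat \<Rightarrow> nat \<Rightarrow> bool" where
  "classical_legal x j \<longleftrightarrow> 1 \<le> j \<and> j \<le> x"

definition q_legal :: "nat set \<Rightarrow> nat \<Rightarrow> bool" where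
  "q_legal S j \<longleftrightarrow> (\<exists>x\<in>S. classical_legal x j)"

definition qmoves_D :: "nat set \<Rightarrow> nat set set" where
  "qmoves_D S = {J. J \<noteq> {} \<and> (\<forall>j\<in>J. q_legal S j)}"

definition q_result :: "nat set \<Rightarrow> nat set \<Rightarrow> nat set" where
  "q_result S J = {x - j | x j. x \<in> S \<and> j \<in> J \<and> classical_legal x j}"

lemma q_result_Max_less:
  assumes "finite S" "S \<noteq> {}" "J \<in> qmoves_D S"
  shows "Max (q_result S J) < Max S"
proof -
  have fin: "finite (q_result S J)"
    by (rule finite_subset[of _ "{..Max S}"]) (auto simp: q_result_def assms intro: le_trans[OF diff_le_self Max_ge])
  from assms(3) obtain j x where "j \<in> J" "x \<in> S" "classical_legal x j"
    by (force simp: qmoves_D_def q_legal_def)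
  then have ne: "q_result S J \<noteq> {}" by (auto simp: q_result_def)
  have "\<forall>y\<in>q_result S J. y < Max S"
  proof
    fix y assume "y \<in> q_result S J"
    then obtain x j where "x \<in> S" "classical_legal x j" "y = x - j"
      by (auto simp: q_result_def)
    moreover have "x \<le> Max S" using assms \<open>x \<in> S\<close> by simp
    ultimately show "y < Max S" by (auto simp: classical_legal_def)
  qed
  then show ?thesis using fin ne by simp
qed

function qgame_D :: "nat set \<Rightarrow> game" where
  "qgame_D S = (if finite S \<and> S \<noteq> {}
     then Game (Abs_fset ((\<lambda>J. qgame_D (q_result S J)) ` qmoves_D S))
     else Game {||})"
  by pat_completeness auto
termination
  by (relation "measure Max") (auto intro: q_result_Max_less)

end

theory Submission
  imports Defs
begin

declare qgame_D.simps[simp del] nimber.simps[simp del]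

definition mex :: "nat set \<Rightarrow> nat" where
  "mex M = (LEAST n. n \<notin> M)"

lemma mex_notin: "finite M \<Longrightarrow> mex M \<notin> M"
  unfolding mex_def
  by (rule LeastI_ex) (use ex_new_if_finite[OF infinite_UNIV_nat] in blast)

lemma mex_less: "m < mex M \<Longrightarrow> m \<in> M"
  unfolding mex_def using not_less_Least by blast

lemma mex_eq: "(\<And>m. m < k \<Longrightarrow> m \<in> M) \<Longrightarrow> k \<notin> M \<Longrightarrow> mex M = k"
  unfolding mex_def
  by (rule Least_equality) (auto simp: not_less[symmetric])

function grundy :: "game \<Rightarrow> nat" where
  "grundy (Game S) = mex (grundy ` fset S)"
  by pat_completeness auto
termination
  by (relation "measure size") (auto dest: size_opt_less)

lemma grundy_eq: "grundy G = mex (grundy ` fset (opts G))"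
  by (cases G) simp

lemma P_pos_iff: "P_pos G \<longleftrightarrow> (\<forall>g\<in>fset (opts G). \<not> P_pos g)"
  by (cases G) simp

lemma gsum_opts: "fset (opts (gsum G H)) =
   (\<lambda>a. gsum a H) ` fset (opts G) \<union> (\<lambda>b. gsum G b) ` fset (opts H)"
  by (cases G; cases H) simp

lemma size_opt: "x \<in> fset (opts G) \<Longrightarrow> size x < size G"
  by (metis game.collapse size_opt_less)

lemma grundy_opt_ne: "x \<in> fset (opts G) \<Longrightarrow> grundy x \<noteq> grundy G"
  using mex_notin[of "grundy ` fset (opts G)"] grundy_eq[of G] by (metis finite_fset finite_imageI image_eqI)

lemma grundy_opt_ex: "k < grundy G \<Longrightarrow> \<exists>x\<in>fset (opts G). grundy x = k"
  using mex_less[of k "grundy ` fset (opts G)"] grundy_eq[of G] by auto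

lemma key: "size A + size B + size X = n \<Longrightarrow> grundy A = grundy B \<Longrightarrow>
  P_pos (gsum A X) \<Longrightarrow> P_pos (gsum B X)"
proof (induction n arbitrary: A B X rule: less_induct)
  case (less n)
  show ?case
  proof (rule ccontr)
    assume "\<not> P_pos (gsum B X)"
    then obtain h where h: "h \<in> fset (opts (gsum B X))" "P_pos h"
      using P_pos_iff by blast
    from h(1) consider B' where "B' \<in> fset (opts B)" "h = gsum B' X"
      | X' where "X' \<in> fset (opts X)" "h = gsum B X'"
      by (auto simp: gsum_opts)
    then show False
    proof cases
      case 2
      have "P_pos (gsum A X')"
      proof (rule less.IH[of "size B + size A + size X'" B A X'])
        show "size B + size A + size X' < n" using less.prems(1) size_opt[OF 2(1)] by linarith
        show "grundy B = grundy A" using less.prems(2) by simp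
        show "P_pos (gsum B X')" using h(2) 2(2) by simp
      qed simp
      moreover have "gsum A X' \<in> fset (opts (gsum A X))"
        using 2 by (auto simp: gsum_opts)
      ultimately show False using less.prems(3) P_pos_iff by blast
    next
      case 1
      have ne: "grundy B' \<noteq> grundy B" using grundy_opt_ne[OF 1(1)] .
      show False
      proof (cases "grundy B' < grundy A")
        case True
        then obtain A' where A': "A' \<in> fset (opts A)" "grundy A' = grundy B'"
          using grundy_opt_ex by blast
        have "P_pos (gsum A' X)"
        proof (rule less.IH[of "size B' + size A' + size X" B' A' X])
          show "size B' + size A' + size X < n"
            using less.prems(1) size_opt[OF 1(1)] size_opt[OF A'(1)] by linarith
          show "grundy B' = grundy A'" using A'(2) by simp
          show "P_pos (gsum B' X)" using h(2) 1(2) by simp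
        qed simp
        moreover have "gsum A' X \<in> fset (opts (gsum A X))"
          using A' by (auto simp: gsum_opts)
        ultimately show False using less.prems(3) P_pos_iff by blast
      next
        case False
        then have "grundy A < grundy B'" using ne less.prems(2) by auto
        then obtain B'' where B'': "B'' \<in> fset (opts B')" "grundy B'' = grundy A"
          using grundy_opt_ex by blast
        have "gsum B'' X \<in> fset (opts (gsum B' X))"
          using B'' by (auto simp: gsum_opts)
        then have "\<not> P_pos (gsum B'' X)" using h(2) 1 P_pos_iff by blast
        moreover have "P_pos (gsum B'' X)"
        proof (rule less.IH[of "size A + size B'' + size X" A B'' X])
          show "size A + size B'' + size X < n"
            using less.prems(1) size_opt[OF 1(1)] size_opt[OF B''(1)] by linarith
          show "grundy A = grundy B''" using B''(2) by simp
          show "P_pos (gsum A X)" using less.prems(3) .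
        qed simp
        ultimately show False by blast
      qed
    qed
  qed
qed

lemma grundy_equiv: "grundy G = grundy H \<Longrightarrow> G \<equiv>\<^sub>G H"
  unfolding game_equiv_def using key by metis

lemma grundy_nimber: "grundy (nimber k) = k"
proof (induction k rule: less_induct)
  case (less k)
  have fin: "finite (nimber ` {..<k})" by simp
  have "grundy (nimber k) = grundy (Game (Abs_fset (nimber ` {..<k})))"
    by (subst nimber.simps) (rule refl)
  also have "\<dots> = mex (grundy ` fset (Abs_fset (nimber ` {..<k})))"
    by (rule grundy.simps)
  also have "fset (Abs_fset (nimber ` {..<k})) = nimber ` {..<k}"
    using fin by (rule Abs_fset_inverse[simplified])
  also have "grundy ` nimber ` {..<k} = {..<k}"
  proof -
    have "grundy ` nimber ` {..<k} = (\<lambda>i. grundy (nimber i)) ` {..<k}"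
      by (rule image_image)
    also have "\<dots> = (\<lambda>i. i) ` {..<k}"
      by (rule image_cong) (auto intro: less.IH)
    finally show ?thesis by simp
  qed
  also have "mex {..<k} = k" by (rule mex_eq) auto
  finally show ?case .
qed

lemma grundy_q0: "Max S = n \<Longrightarrow> finite S \<Longrightarrow> S \<noteq> {} \<Longrightarrow> grundy (qgame_D S) = Max S"
proof (induction n arbitrary: S rule: less_induct)
  case (less n)
  have fS: "finite S" "S \<noteq> {}" using less.prems(2,3) by auto
  have finq: "finite (qmoves_D S)"
  proof (rule finite_subset[of _ "Pow {..Max S}"])
    show "qmoves_D S \<subseteq> Pow {..Max S}"
    proof
      fix J assume J: "J \<in> qmoves_D S"
      show "J \<in> Pow {..Max S}"
      proof (rule PowI, rule subsetI)
        fix j assume "j \<in> J"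
        then obtain x where "x \<in> S" "j \<le> x" using J
          by (auto simp: qmoves_D_def q_legal_def classical_legal_def)
        moreover have "x \<le> Max S" using fS \<open>x \<in> S\<close> by simp
        ultimately show "j \<in> {..Max S}" by simp
      qed
    qed
  qed simp
  have fr: "finite (q_result S J)" for J
  proof (rule finite_subset[of _ "{..Max S}"])
    show "q_result S J \<subseteq> {..Max S}"
    proof
      fix y assume "y \<in> q_result S J"
      then obtain x j where "x \<in> S" "y = x - j" by (auto simp: q_result_def)
      moreover have "x \<le> Max S" using fS \<open>x \<in> S\<close> by simp
      ultimately show "y \<in> {..Max S}" by simp
    qed
  qed simp
  have ner: "q_result S J \<noteq> {}" if "J \<in> qmoves_D S" for J
  proof -
    from that obtain j x where "j \<in> J" "x \<in> S" "classical_legal x j"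
      by (force simp: qmoves_D_def q_legal_def)
    then show ?thesis by (auto simp: q_result_def)
  qed
  have val: "grundy (qgame_D (q_result S J)) = Max (q_result S J)" if "J \<in> qmoves_D S" for J
    using less.IH[OF _ refl fr ner[OF that]] q_result_Max_less[OF fS that] less.prems(1) by simp
  have "grundy (qgame_D S) = mex (grundy ` (\<lambda>J. qgame_D (q_result S J)) ` qmoves_D S)"
    apply (subst qgame_D.simps)
    using fS finq by (simp add: Abs_fset_inverse)
  also have "grundy ` (\<lambda>J. qgame_D (q_result S J)) ` qmoves_D S
      = (\<lambda>J. Max (q_result S J)) ` qmoves_D S"
    using val by (force simp: image_image)
  also have "mex \<dots> = Max S"
  proof (rule mex_eq)
    fix m assume m: "m < Max S"
    define j where "j = Max S - m"
    have MS: "Max S \<in> S" using fS by simp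
    have J: "{j} \<in> qmoves_D S"
      using m MS unfolding qmoves_D_def q_legal_def classical_legal_def j_def
      by (auto intro!: bexI[of _ "Max S"])
    have "m \<in> q_result S {j}"
    proof -
      have "m = Max S - j \<and> Max S \<in> S \<and> j \<in> {j} \<and> classical_legal (Max S) j"
        using m MS by (auto simp: classical_legal_def j_def)
      then show ?thesis unfolding q_result_def by blast
    qed
    moreover have "\<forall>y\<in>q_result S {j}. y \<le> m"
    proof
      fix y assume "y \<in> q_result S {j}"
      then obtain x where "x \<in> S" "y = x - j" by (auto simp: q_result_def)
      moreover have "x \<le> Max S" using fS \<open>x \<in> S\<close> by simp
      ultimately show "y \<le> m" using m by (simp add: j_def)
    qed
    ultimately have "Max (q_result S {j}) = m"
      using fr by (intro Max_eqI) auto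
    then show "m \<in> (\<lambda>J. Max (q_result S J)) ` qmoves_D S" using J by force
  next
    show "Max S \<notin> (\<lambda>J. Max (q_result S J)) ` qmoves_D S"
    proof
      assume "Max S \<in> (\<lambda>J. Max (q_result S J)) ` qmoves_D S"
      then obtain J where "J \<in> qmoves_D S" "Max S = Max (q_result S J)" by blast
      with q_result_Max_less[OF fS this(1)] show False by simp
    qed
  qed
  finally show ?case .
qed

lemma grundy_q: "finite S \<Longrightarrow> S \<noteq> {} \<Longrightarrow> grundy (qgame_D S) = Max S"
  using grundy_q0 by blast

theorem lemma3:
  fixes hs :: "nat list"
  assumes "hs \<noteq> []"
  shows "qgame_D (set hs) \<equiv>\<^sub>G nimber (Max (set hs))"
proof (rule grundy_equiv)
  have "grundy (qgame_D (set hs)) = Max (set hs)"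
    using assms by (intro grundy_q) auto
  then show "grundy (qgame_D (set hs)) = grundy (nimber (Max (set hs)))"
    by (simp only: grundy_nimber)
qed

end
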